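(* Let $f\in\mathbb{R}[X_1,\dots,X_n]$ be a form of degree $2d$. If $$f_{2d,i}\ge \sum_{\alpha\in\Delta,\ \alpha_i\ne 0}\alpha_i\left(\frac{|f_{\alpha}|}{2d}\right)^{2d/(\alpha_in_{\alpha})}\quad\text{for } i=1,\dots,n,$$ where $n_{\alpha}:=|\{i:\alpha_i\neq0\}|$, then $f$ is SOBS.
   Context: For $\alpha\in\mathbb{N}^n$ write $\underline{X}^\alpha=X_1^{\alpha_1}\cdots X_n^{\alpha_n}$. For $f=\sum_\alpha f_\alpha\underline{X}^\alpha$ of degree $2d$, $f_{2d,i}$ denotes the coefficient of $X_i^{2d}$, $\Omega=\{\alpha: f_\alpha\ne0\}\setminus\{\underline{0},2d\epsilon_1,\dots,2d\epsilon_n\}$ ($\epsilon_i$ the standard unit vectors), and $\Delta=\{\alpha\in\Omega:\ f_\alpha<0\text{ or }\alpha_i\text{ odd for some }i\}$. SOBS means a finite sum of squares of polynomials of the form $a\underline{X}^\alpha-b\underline{X}^\beta$, $a,b\in\mathbb{R}$. *)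

theory Defs
  imports Complex_Main "HOL-Library.Poly_Mapping"
begin

text \<open>The n variables X_1..X_n of the paper are indexed 0..n-1 here.\<close>

type_synonym mpoly = "(nat \<Rightarrow>\<^sub>0 nat) \<Rightarrow>\<^sub>0 real"

definition monom :: "(nat \<Rightarrow>\<^sub>0 nat) \<Rightarrow> real \<Rightarrow> mpoly" where
  "monom \<alpha> c = Poly_Mapping.single \<alpha> c"

definition deg_mon :: "(nat \<Rightarrow>\<^sub>0 nat) \<Rightarrow> nat" where
  "deg_mon \<alpha> = (\<Sum>i\<in>Poly_Mapping.keys \<alpha>. Poly_Mapping.lookup \<alpha> i)"

definition is_form :: "nat \<Rightarrow> nat \<Rightarrow> mpoly \<Rightarrow> bool" where
  "is_form n k f \<longleftrightarrow> (\<forall>\<alpha>\<in>Poly_Mapping.keys f. Poly_Mapping.keys \<alpha> \<subseteq> {..<n} \<and> deg_mon \<alpha> = k)"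

definition Omega :: "nat \<Rightarrow> nat \<Rightarrow> mpoly \<Rightarrow> (nat \<Rightarrow>\<^sub>0 nat) set" where
  "Omega n d f = Poly_Mapping.keys f - ({0} \<union> {Poly_Mapping.single i (2*d) | i. i < n})"

definition Delta :: "nat \<Rightarrow> nat \<Rightarrow> mpoly \<Rightarrow> (nat \<Rightarrow>\<^sub>0 nat) set" where
  "Delta n d f = {\<alpha> \<in> Omega n d f. Poly_Mapping.lookup f \<alpha> < 0 \<or> (\<exists>i. odd (Poly_Mapping.lookup \<alpha> i))}"

definition SOBS :: "nat \<Rightarrow> mpoly \<Rightarrow> bool" where
  "SOBS n f \<longleftrightarrow> (\<exists>L :: (real \<times> real \<times> (nat \<Rightarrow>\<^sub>0 nat) \<times> (nat \<Rightarrow>\<^sub>0 nat)) list.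
     (\<forall>(a,b,\<alpha>,\<beta>)\<in>set L. Poly_Mapping.keys \<alpha> \<subseteq> {..<n} \<and> Poly_Mapping.keys \<beta> \<subseteq> {..<n}) \<and>
     f = sum_list (map (\<lambda>(a,b,\<alpha>,\<beta>). (monom \<alpha> a - monom \<beta> b) * (monom \<alpha> a - monom \<beta> b)) L))"

end

theory Submission
  imports Defs
begin

definition mon :: "nat \<Rightarrow> mpoly \<Rightarrow> bool" where
  "mon n P \<longleftrightarrow> (\<exists>e c. Poly_Mapping.keys e \<subseteq> {..<n} \<and> P = monom e c)"

lemma monom_mult: "monom e a * monom e' b = monom (e+e') (a*b)"
  by (simp add: monom_def mult_single)

lemma monom_add: "monom e a + monom e b = monom e (a+b)"
  by (simp add: monom_def single_add)

lemma monom_diff: "monom e a - monom e b = monom e (a-b)"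
  by (simp add: monom_def single_diff)

lemma monom_zero[simp]: "monom e 0 = 0"
  by (simp add: monom_def)

lemma monom_uminus: "- monom e a = monom e (-a)"
  by (simp add: monom_def single_uminus)

lemma monom_sum: "finite A \<Longrightarrow> (\<Sum>x\<in>A. monom e (g x)) = monom e (\<Sum>x\<in>A. g x)"
  by (induction A rule: finite_induct) (auto simp: monom_add)

lemma monom_prod: "finite A \<Longrightarrow> (\<Prod>x\<in>A. monom (e x) (g x)) = monom (\<Sum>x\<in>A. e x) (\<Prod>x\<in>A. g x)"
  by (induction A rule: finite_induct) (auto simp: monom_mult, simp add: monom_def)


lemma monom_single_pow: "monom (Poly_Mapping.single i a) c ^ k = monom (Poly_Mapping.single i (k*a)) (c ^ k)"
  by (induction k) (auto simp: monom_mult single_add[symmetric], simp add: monom_def)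

lemma keys_add_sub: "Poly_Mapping.keys (a + b) \<subseteq> Poly_Mapping.keys a \<union> Poly_Mapping.keys b"
  by (rule keys_add)

lemma mon_mult: "mon n P \<Longrightarrow> mon n Q \<Longrightarrow> mon n (P*Q)"
  unfolding mon_def
  by (metis (no_types, lifting) keys_add_sub le_sup_iff monom_mult order_trans)

lemma mon_one: "mon n 1"
  unfolding mon_def by (rule exI[of _ 0], rule exI[of _ 1]) (simp add: monom_def)

lemma mon_pow: "mon n P \<Longrightarrow> mon n (P ^ k)"
  by (induction k) (auto simp: mon_one mon_mult)

lemma mon_uminus: "mon n P \<Longrightarrow> mon n (- P)"
  unfolding mon_def by (metis monom_uminus)

lemma mon_const: "mon n (monom 0 c)"
  unfolding mon_def by (rule exI[of _ 0]) auto

lemma SOBS_zero: "SOBS n 0"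
  unfolding SOBS_def by (rule exI[of _ "[]"]) simp

lemma SOBS_add: "SOBS n p \<Longrightarrow> SOBS n q \<Longrightarrow> SOBS n (p + q)"
  unfolding SOBS_def
  apply (elim exE conjE)
  subgoal for L1 L2 by (rule exI[of _ "L1 @ L2"]) auto
  done

lemma SOBS_sq: "mon n P \<Longrightarrow> mon n Q \<Longrightarrow> SOBS n ((P - Q) * (P - Q))"
  unfolding SOBS_def mon_def
  apply (elim exE conjE)
  subgoal for e c e2 c2 by (rule exI[where x="[(e2,c2,e,c)]"]) auto
  done

lemma SOBS_scale: assumes "mon n P" "SOBS n p" shows "SOBS n (P * P * p)"
proof -
  obtain w c where w: "Poly_Mapping.keys w \<subseteq> {..<n}" "P = monom w c" using assms(1) mon_def by auto
  obtain L where L: "\<forall>(a,b,\<alpha>,\<beta>)\<in>set L. Poly_Mapping.keys \<alpha> \<subseteq> {..<n} \<and> Poly_Mapping.keys \<beta> \<subseteq> {..<n}"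
     "p = sum_list (map (\<lambda>(a,b,\<alpha>,\<beta>). (monom \<alpha> a - monom \<beta> b) * (monom \<alpha> a - monom \<beta> b)) L)"
    using assms(2) SOBS_def by auto
  define L' where "L' = map (\<lambda>(a,b,\<alpha>,\<beta>). (c*a, c*b, w+\<alpha>, w+\<beta>)) L"
  have "P * P * p = sum_list (map (\<lambda>x. P * P * (case x of (a,b,\<alpha>,\<beta>) \<Rightarrow> (monom \<alpha> a - monom \<beta> b) * (monom \<alpha> a - monom \<beta> b))) L)"
    unfolding L(2) by (simp add: sum_list_const_mult o_def)
  also have "\<dots> = sum_list (map (\<lambda>(a,b,\<alpha>,\<beta>). (monom \<alpha> a - monom \<beta> b) * (monom \<alpha> a - monom \<beta> b)) L')"
    unfolding L'_def
    by (auto simp: o_def w(2) algebra_simps monom_mult intro!: arg_cong[where f=sum_list] map_cong)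
  finally have eq: "P * P * p = sum_list (map (\<lambda>(a,b,\<alpha>,\<beta>). (monom \<alpha> a - monom \<beta> b) * (monom \<alpha> a - monom \<beta> b)) L')" .
  have "\<forall>(a,b,\<alpha>,\<beta>)\<in>set L'. Poly_Mapping.keys \<alpha> \<subseteq> {..<n} \<and> Poly_Mapping.keys \<beta> \<subseteq> {..<n}"
    using L(1) w(1) keys_add_sub unfolding L'_def by fastforce
  with eq show ?thesis unfolding SOBS_def by blast
qed

lemma SOBS_const: assumes "c \<ge> 0" "SOBS n p" shows "SOBS n (monom 0 c * p)"
proof -
  have "monom 0 c = monom 0 (sqrt c) * monom 0 (sqrt c)"
    using assms(1) by (simp add: monom_mult)
  then show ?thesis using SOBS_scale[OF mon_const assms(2)] by simp
qed

lemma SOBS_sum: "finite A \<Longrightarrow> (\<And>x. x \<in> A \<Longrightarrow> SOBS n (g x)) \<Longrightarrow> SOBS n (\<Sum>x\<in>A. g x)"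
  by (induction A rule: finite_induct) (auto simp: SOBS_zero SOBS_add)

lemma SOBS_sum_list: "(\<And>x. x \<in> set xs \<Longrightarrow> SOBS n (g x)) \<Longrightarrow> SOBS n (sum_list (map g xs))"
  by (induction xs) (auto simp: SOBS_zero SOBS_add)


lemma bin_id:
  fixes A B :: "'a::comm_ring_1"
  shows "of_nat m * A^(m+1) + B^(m+1) - of_nat (m+1) * A^m * B
         = (A-B)*(A-B) * (\<Sum>j<m. of_nat (j+1) * A^j * B^(m-1-j))"
proof (induction m)
  case 0
  then show ?case by simp
next
  case (Suc m)
  have "(\<Sum>j<Suc m. of_nat (j+1) * A^j * B^(Suc m-1-j))
        = B * (\<Sum>j<m. of_nat (j+1) * A^j * B^(m-1-j)) + of_nat (m+1) * A^m"
  proof -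
    have "(\<Sum>j<m. of_nat (j+1) * A^j * B^(Suc m-1-j)) = B * (\<Sum>j<m. of_nat (j+1) * A^j * B^(m-1-j))"
      unfolding sum_distrib_left
    proof (rule sum.cong)
      fix j assume "j \<in> {..<m}"
      then have "Suc m - 1 - j = Suc (m-1-j)" by auto
      then show "of_nat (j+1) * A^j * B^(Suc m-1-j) = B * (of_nat (j+1) * A^j * B^(m-1-j))"
        by (simp add: algebra_simps)
    qed simp
    then show ?thesis by simp
  qed
  then have "(A-B)*(A-B) * (\<Sum>j<Suc m. of_nat (j+1) * A^j * B^(Suc m-1-j))
     = B * ((A-B)*(A-B) * (\<Sum>j<m. of_nat (j+1) * A^j * B^(m-1-j))) + of_nat (m+1) * A^m * (A-B)*(A-B)"
    by (simp add: algebra_simps)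
  also have "\<dots> = B * (of_nat m * A^(m+1) + B^(m+1) - of_nat (m+1) * A^m * B) + of_nat (m+1) * A^m * (A-B)*(A-B)"
    using Suc by simp
  also have "\<dots> = of_nat (Suc m) * A^(Suc m+1) + B^(Suc m+1) - of_nat (Suc m+1) * A^Suc m * B"
    by (simp add: algebra_simps)
  finally show ?case by simp
qed

lemma of_nat_mpoly: "(of_nat k :: mpoly) = monom 0 (real k)"
  by (simp add: monom_def)

lemma SOBS_bin:
  assumes P: "mon n P" and Q: "mon n Q"
  shows "SOBS n (of_nat m * (P*P)^(m+1) + (Q*Q)^(m+1) - of_nat (m+1) * (P*P)^m * (Q*Q))"
proof -
  have "of_nat m * (P*P)^(m+1) + (Q*Q)^(m+1) - of_nat (m+1) * (P*P)^m * (Q*Q)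
    = (\<Sum>j<m. monom 0 (real (j+1)) * ((P^(j+2)*Q^(m-1-j) - P^j*Q^(m+1-j)) * (P^(j+2)*Q^(m-1-j) - P^j*Q^(m+1-j))))"
    unfolding bin_id sum_distrib_left
  proof (rule sum.cong)
    fix j assume "j \<in> {..<m}"
    then have e: "m+1-j = (m-1-j) + 2" by auto
    show "(P*P - Q*Q)*(P*P - Q*Q) * (of_nat (j+1) * (P*P)^j * (Q*Q)^(m-1-j))
      = monom 0 (real (j+1)) * ((P^(j+2)*Q^(m-1-j) - P^j*Q^(m+1-j)) * (P^(j+2)*Q^(m-1-j) - P^j*Q^(m+1-j)))"
      unfolding e of_nat_mpoly[symmetric] by (simp add: algebra_simps power_add power_mult_distrib power2_eq_square)
  qed simp
  also have "SOBS n \<dots>"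
    by (intro SOBS_sum SOBS_const SOBS_sq mon_mult mon_pow P Q) auto
  finally show ?thesis .
qed


lemma SOBS_amgm:
  "(\<forall>P\<in>set Ps. mon n P) \<Longrightarrow>
   SOBS n (sum_list (map (\<lambda>P. (P*P)^(length Ps)) Ps) - of_nat (length Ps) * prod_list (map (\<lambda>P. P*P) Ps))"
proof (induction Ps)
  case Nil
  then show ?case by (simp add: SOBS_zero)
next
  case (Cons P rest)
  define k where "k = length rest"
  define b where "b = P*P"
  define E where "E = sum_list (map (\<lambda>P. (P*P)^k) rest) - of_nat k * prod_list (map (\<lambda>P. P*P) rest)"
  have IH: "SOBS n E" using Cons unfolding E_def k_def by auto
  have mP: "mon n P" using Cons by auto
  show ?case
  proof (cases "k = 0")
    case True
    then have "rest = []" unfolding k_def by auto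
    then show ?thesis by (simp add: SOBS_zero)
  next
    case False
    define T where "T = sum_list (map (\<lambda>Q. (Q*Q)^(k+1)) rest) + b^(k+1) - of_nat (k+1) * (b * prod_list (map (\<lambda>P. P*P) rest))"
    have goal: "sum_list (map (\<lambda>Q. (Q*Q)^(length (P#rest))) (P#rest)) - of_nat (length (P#rest)) * prod_list (map (\<lambda>P. P*P) (P#rest)) = T"
      unfolding T_def b_def k_def by (simp add: algebra_simps)
    have s1: "sum_list (map (\<lambda>Q. of_nat k * (Q*Q)^(k+1) + b^(k+1) - of_nat (k+1) * (Q*Q)^k * b) rest)
        = of_nat k * sum_list (map (\<lambda>Q. (Q*Q)^(k+1)) rest) + of_nat k * b^(k+1) - of_nat (k+1) * b * sum_list (map (\<lambda>Q. (Q*Q)^k) rest)"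
      by (simp only: sum_list_addf sum_list_subtractf sum_list_const_mult sum_list_mult_const sum_list_triv k_def mult.assoc[symmetric])
         (simp add: mult.commute mult.left_commute sum_list_const_mult)
    have kT: "of_nat k * T = sum_list (map (\<lambda>Q. of_nat k * (Q*Q)^(k+1) + b^(k+1) - of_nat (k+1) * (Q*Q)^k * b) rest)
       + of_nat (k+1) * (P * P * E)"
      unfolding s1 by (simp add: T_def E_def b_def algebra_simps)
    have "SOBS n (of_nat k * T)"
    proof -
      have "SOBS n (sum_list (map (\<lambda>Q. of_nat k * (Q*Q)^(k+1) + b^(k+1) - of_nat (k+1) * (Q*Q)^k * b) rest))"
        using Cons.prems unfolding b_def
        by (intro SOBS_sum_list SOBS_bin) auto
      moreover have "SOBS n (of_nat (k+1) * (P * P * E))"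
        unfolding of_nat_mpoly by (intro SOBS_const SOBS_scale mP IH) auto
      ultimately show ?thesis unfolding kT by (rule SOBS_add)
    qed
    then have "SOBS n (monom 0 (1 / real k) * (of_nat k * T))" by (intro SOBS_const) auto
    moreover have "monom 0 (1 / real k) * (of_nat k * T) = T"
      using False by (simp add: of_nat_mpoly monom_mult mult.assoc[symmetric]) (simp add: monom_def)
    ultimately show ?thesis using goal by simp
  qed
qed


lemma prod_list_sq: "prod_list (map (\<lambda>P. P*P) xs) = prod_list xs * prod_list (xs::mpoly list)"
  by (induction xs) (auto simp: algebra_simps)

lemma SOBS_hurwitz:
  assumes "\<forall>P\<in>set xs. mon n P" "\<forall>P\<in>set ys. mon n P" "length xs = d" "length ys = d"
    and s: "\<sigma> * \<sigma> = 1"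
  shows "SOBS n (sum_list (map (\<lambda>P. P^(2*d)) (xs@ys)) + monom 0 (\<sigma> * real (2*d)) * prod_list (xs@ys))"
proof -
  define U where "U = prod_list xs"
  define V where "V = prod_list ys"
  define S where "S = monom 0 \<sigma>"
  have SS: "S * S = 1" unfolding S_def using s by (simp add: monom_mult) (simp add: monom_def)
  have A: "SOBS n (sum_list (map (\<lambda>P. (P*P)^d) xs) - of_nat d * (U*U))"
    using SOBS_amgm[of xs n] assms unfolding U_def by (simp add: prod_list_sq)
  have B: "SOBS n (sum_list (map (\<lambda>P. (P*P)^d) ys) - of_nat d * (V*V))"
    using SOBS_amgm[of ys n] assms unfolding V_def by (simp add: prod_list_sq)
  have mU: "mon n U" unfolding U_def using assms(1) by (induction xs) (auto intro: mon_mult mon_one)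
  have mV: "mon n V" unfolding V_def using assms(2) by (induction ys) (auto intro: mon_mult mon_one)
  have C: "SOBS n (of_nat d * ((U - (- (S*V))) * (U - (- (S*V)))))"
    unfolding of_nat_mpoly S_def
    by (intro SOBS_const SOBS_sq mU mon_uminus mon_mult mV mon_const) auto
  have sq: "(U - (- (S*V))) * (U - (- (S*V))) = U*U + 2*S*U*V + (S*S)*V*V"
    by (simp add: algebra_simps)
  have pw: "\<And>P::mpoly. P^(2*d) = (P*P)^d" by (simp add: power_mult power2_eq_square)
  have "sum_list (map (\<lambda>P. P^(2*d)) (xs@ys)) + monom 0 (\<sigma> * real (2*d)) * prod_list (xs@ys)
    = (sum_list (map (\<lambda>P. (P*P)^d) xs) - of_nat d * (U*U)) + (sum_list (map (\<lambda>P. (P*P)^d) ys) - of_nat d * (V*V))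
      + of_nat d * ((U - (- (S*V))) * (U - (- (S*V))))"
  proof -
    have m: "monom 0 (\<sigma> * real (2*d)) = S * of_nat 2 * of_nat d"
      unfolding S_def of_nat_mpoly by (simp add: monom_mult mult.assoc)
    have r: "(sum_list (map (\<lambda>P. (P*P)^d) xs) - of_nat d * (U*U)) + (sum_list (map (\<lambda>P. (P*P)^d) ys) - of_nat d * (V*V))
      + of_nat d * ((U - (- (S*V))) * (U - (- (S*V)))) =
      sum_list (map (\<lambda>P. (P*P)^d) xs) + sum_list (map (\<lambda>P. (P*P)^d) ys) + S * of_nat 2 * of_nat d * (U * V)
      + of_nat d * ((S*S) * (V*V) - V*V)"
      unfolding sq by (simp add: algebra_simps)
    have l: "sum_list (map (\<lambda>P. P^(2*d)) (xs@ys)) = sum_list (map (\<lambda>P. (P*P)^d) xs) + sum_list (map (\<lambda>P. (P*P)^d) ys)"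
      by (simp only: pw map_append sum_list_append)
    have p: "prod_list (xs@ys) = U * V" unfolding U_def V_def by simp
    show ?thesis unfolding r l p m SS by (simp only: mult_1_left diff_self mult_zero_right add_0_right)

  qed
  then show ?thesis using SOBS_add[OF SOBS_add[OF A B] C] by simp
qed


definition slots :: "(nat \<Rightarrow>\<^sub>0 nat) \<Rightarrow> nat \<Rightarrow> nat list" where
  "slots \<alpha> m = concat (map (\<lambda>i. replicate (Poly_Mapping.lookup \<alpha> i) i) [0..<m])"

lemma slots_sum: "sum_list (map g (slots \<alpha> m)) = (\<Sum>i<m. of_nat (Poly_Mapping.lookup \<alpha> i) * (g i :: 'a::comm_ring_1))"
  by (induction m) (auto simp: slots_def sum_list_replicate)

lemma slots_prod: "prod_list (map g (slots \<alpha> m)) = (\<Prod>i<m. (g i :: 'a::comm_ring_1) ^ Poly_Mapping.lookup \<alpha> i)"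
  by (induction m) (auto simp: slots_def)

lemma slots_length: "length (slots \<alpha> m) = (\<Sum>i<m. Poly_Mapping.lookup \<alpha> i)"
  by (induction m) (auto simp: slots_def)

lemma slots_set: "set (slots \<alpha> m) \<subseteq> {..<m}"
  by (auto simp: slots_def)

lemma expand_keys:
  fixes \<alpha> :: "'a \<Rightarrow>\<^sub>0 'b::comm_monoid_add"
  assumes "Poly_Mapping.keys \<alpha> \<subseteq> A" "finite A"
  shows "(\<Sum>i\<in>A. Poly_Mapping.single i (Poly_Mapping.lookup \<alpha> i)) = \<alpha>"
proof (rule poly_mapping_eqI)
  fix k
  have "Poly_Mapping.lookup (\<Sum>i\<in>A. Poly_Mapping.single i (Poly_Mapping.lookup \<alpha> i)) k
      = (\<Sum>i\<in>A. if i = k then Poly_Mapping.lookup \<alpha> i else 0)"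
    by (simp add: lookup_sum lookup_single when_def)
  also have "\<dots> = (if k \<in> A then Poly_Mapping.lookup \<alpha> k else 0)"
    using assms(2) by (simp add: sum.delta')
  also have "\<dots> = Poly_Mapping.lookup \<alpha> k"
    using assms(1) by (auto simp: in_keys_iff)
  finally show "Poly_Mapping.lookup (\<Sum>i\<in>A. Poly_Mapping.single i (Poly_Mapping.lookup \<alpha> i)) k = Poly_Mapping.lookup \<alpha> k" .
qed

lemma deg_mon_n: "Poly_Mapping.keys \<alpha> \<subseteq> {..<n} \<Longrightarrow> deg_mon \<alpha> = (\<Sum>i<n. Poly_Mapping.lookup \<alpha> i)"
  unfolding deg_mon_def by (rule sum.mono_neutral_left) (auto simp: in_keys_iff)

lemma SOBS_alpha:
  assumes keys: "Poly_Mapping.keys \<alpha> \<subseteq> {..<n}" and deg: "deg_mon \<alpha> = 2*d" and s: "\<sigma> * \<sigma> = 1"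
  shows "SOBS n ((\<Sum>i<n. monom (Poly_Mapping.single i (2*d)) (real (Poly_Mapping.lookup \<alpha> i) * t i ^ (2*d)))
            + monom \<alpha> (\<sigma> * real (2*d) * (\<Prod>i<n. t i ^ Poly_Mapping.lookup \<alpha> i)))"
proof -
  define zs where "zs = slots \<alpha> n"
  define g where "g = (\<lambda>i. monom (Poly_Mapping.single i 1) (t i))"
  define Ps where "Ps = map g zs"
  have len: "length Ps = 2*d" unfolding Ps_def zs_def using slots_length deg deg_mon_n[OF keys] by simp
  have mg: "mon n (g i)" if "i < n" for i
    unfolding g_def mon_def using that by (intro exI[of _ "Poly_Mapping.single i 1"]) auto
  have mon: "\<forall>P\<in>set Ps. mon n P" unfolding Ps_def using slots_set[of \<alpha> n] zs_def mg by auto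
  have split: "Ps = take d Ps @ drop d Ps" by simp
  have H: "SOBS n (sum_list (map (\<lambda>P. P^(2*d)) Ps) + monom 0 (\<sigma> * real (2*d)) * prod_list Ps)"
    apply (subst (1 2) split)
    apply (rule SOBS_hurwitz[OF _ _ _ _ s])
    using mon len by (auto dest: in_set_takeD in_set_dropD)
  have e1: "sum_list (map (\<lambda>P. P^(2*d)) Ps) = (\<Sum>i<n. monom (Poly_Mapping.single i (2*d)) (real (Poly_Mapping.lookup \<alpha> i) * t i ^ (2*d)))"
    unfolding Ps_def zs_def map_map o_def slots_sum g_def monom_single_pow of_nat_mpoly
    by (simp add: monom_mult)
  have e2: "monom 0 (\<sigma> * real (2*d)) * prod_list Ps = monom \<alpha> (\<sigma> * real (2*d) * (\<Prod>i<n. t i ^ Poly_Mapping.lookup \<alpha> i))"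
    unfolding Ps_def zs_def slots_prod g_def monom_single_pow monom_prod[OF finite_lessThan]
    using expand_keys[OF keys] by (simp add: monom_mult)
  show ?thesis using H unfolding e1 e2 .
qed


definition cc :: "nat \<Rightarrow> (nat \<Rightarrow>\<^sub>0 nat) \<Rightarrow> real \<Rightarrow> nat \<Rightarrow> real" where
  "cc d \<beta> a i = (if Poly_Mapping.lookup \<beta> i \<noteq> 0 then real (Poly_Mapping.lookup \<beta> i) *
      (\<bar>a\<bar> / real (2*d)) powr (real (2*d) / (real (Poly_Mapping.lookup \<beta> i) * real (card (Poly_Mapping.keys \<beta>)))) else 0)"

lemma SOBS_delta:
  assumes keys: "Poly_Mapping.keys \<beta> \<subseteq> {..<n}" and deg: "deg_mon \<beta> = 2*d" and d: "d \<ge> 1" and a: "a \<noteq> 0"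
  shows "SOBS n ((\<Sum>i<n. monom (Poly_Mapping.single i (2*d)) (cc d \<beta> a i)) + monom \<beta> a)"
proof -
  define x where "x = \<bar>a\<bar> / real (2*d)"
  define N where "N = card (Poly_Mapping.keys \<beta>)"
  define t where "t = (\<lambda>i. if Poly_Mapping.lookup \<beta> i \<noteq> 0 then x powr (1 / (real (Poly_Mapping.lookup \<beta> i) * real N)) else 1)"
  have x: "x > 0" unfolding x_def using a d by auto
  have "Poly_Mapping.keys \<beta> \<noteq> {}"
    using deg d unfolding deg_mon_def by auto
  then have N: "N \<ge> 1" unfolding N_def by (simp add: Suc_le_eq card_gt_0_iff)
  have s: "sgn a * sgn a = 1" using a by (simp add: sgn_if)
  have H: "SOBS n ((\<Sum>i<n. monom (Poly_Mapping.single i (2*d)) (real (Poly_Mapping.lookup \<beta> i) * t i ^ (2*d)))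
            + monom \<beta> (sgn a * real (2*d) * (\<Prod>i<n. t i ^ Poly_Mapping.lookup \<beta> i)))"
    by (rule SOBS_alpha[OF keys deg s])
  have e1: "real (Poly_Mapping.lookup \<beta> i) * t i ^ (2*d) = cc d \<beta> a i" for i
  proof (cases "Poly_Mapping.lookup \<beta> i = 0")
    case True then show ?thesis by (simp add: cc_def)
  next
    case False
    have "t i ^ (2*d) = x powr (real (2*d) * (1 / (real (Poly_Mapping.lookup \<beta> i) * real N)))"
      unfolding t_def using False x by (simp add: powr_power)
    also have "\<dots> = x powr (real (2*d) / (real (Poly_Mapping.lookup \<beta> i) * real N))" by simp
    finally show ?thesis using False unfolding cc_def x_def N_def by simp
  qed
  have e2: "(\<Prod>i<n. t i ^ Poly_Mapping.lookup \<beta> i) = x"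
  proof -
    have "(\<Prod>i<n. t i ^ Poly_Mapping.lookup \<beta> i) = (\<Prod>i\<in>Poly_Mapping.keys \<beta>. t i ^ Poly_Mapping.lookup \<beta> i)"
      using keys by (intro prod.mono_neutral_right) (auto simp: in_keys_iff)
    also have "\<dots> = (\<Prod>i\<in>Poly_Mapping.keys \<beta>. x powr (1 / real N))"
    proof (rule prod.cong)
      fix i assume "i \<in> Poly_Mapping.keys \<beta>"
      then have ne: "Poly_Mapping.lookup \<beta> i \<noteq> 0" by (simp add: in_keys_iff)
      have "t i ^ Poly_Mapping.lookup \<beta> i = x powr (real (Poly_Mapping.lookup \<beta> i) * (1 / (real (Poly_Mapping.lookup \<beta> i) * real N)))"
        unfolding t_def using ne x by (simp add: powr_power)
      also have "\<dots> = x powr (1 / real N)" using ne by simp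
      finally show "t i ^ Poly_Mapping.lookup \<beta> i = x powr (1 / real N)" .
    qed simp
    also have "\<dots> = (x powr (1 / real N)) ^ N" by (simp add: N_def)
    also have "\<dots> = x powr (real N * (1 / real N))" using x by (simp add: powr_power)
    also have "\<dots> = x" using N x by simp
    finally show ?thesis .
  qed
  have e3: "sgn a * real (2*d) * x = a" unfolding x_def using d by (simp add: sgn_mult_abs)
  show ?thesis using H unfolding e1 e2 e3 .
qed


lemma SOBS_monom_even:
  assumes "c \<ge> 0" "Poly_Mapping.keys \<gamma> \<subseteq> {..<n}"
  shows "SOBS n (monom (\<gamma>+\<gamma>) c)"
proof -
  have "SOBS n (monom 0 c * ((monom \<gamma> 1 - monom 0 0) * (monom \<gamma> 1 - monom 0 0)))"
    using assms by (intro SOBS_const SOBS_sq mon_const) (auto simp: mon_def)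
  moreover have "monom 0 c * ((monom \<gamma> 1 - monom 0 0) * (monom \<gamma> 1 - monom 0 0)) = monom (\<gamma>+\<gamma>) c"
    by (simp add: monom_mult)
  ultimately show ?thesis by simp
qed

lemma expand_poly: "f = (\<Sum>\<beta>\<in>Poly_Mapping.keys f. monom \<beta> (Poly_Mapping.lookup f \<beta>))"
  unfolding monom_def by (rule expand_keys[symmetric]) auto

lemma deg0: "deg_mon \<alpha> = 0 \<Longrightarrow> \<alpha> = 0"
  unfolding deg_mon_def by (auto simp: in_keys_iff intro!: poly_mapping_eqI)

lemma half_even:
  fixes \<beta> :: "nat \<Rightarrow>\<^sub>0 nat"
  assumes "\<forall>i. even (Poly_Mapping.lookup \<beta> i)"
  shows "\<exists>\<gamma>. Poly_Mapping.keys \<gamma> \<subseteq> Poly_Mapping.keys \<beta> \<and> \<beta> = \<gamma> + \<gamma>"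
proof -
  define \<gamma> where "\<gamma> = (\<Sum>i\<in>Poly_Mapping.keys \<beta>. Poly_Mapping.single i (Poly_Mapping.lookup \<beta> i div 2))"
  have "\<gamma> + \<gamma> = (\<Sum>i\<in>Poly_Mapping.keys \<beta>. Poly_Mapping.single i (Poly_Mapping.lookup \<beta> i div 2 + Poly_Mapping.lookup \<beta> i div 2))"
    unfolding \<gamma>_def by (simp add: single_add sum.distrib)
  also have "\<dots> = (\<Sum>i\<in>Poly_Mapping.keys \<beta>. Poly_Mapping.single i (Poly_Mapping.lookup \<beta> i))"
  proof (rule sum.cong)
    fix i
    have "\<forall>x::nat. even x \<longrightarrow> x div 2 + x div 2 = x" by presburger
    then show "Poly_Mapping.single i (Poly_Mapping.lookup \<beta> i div 2 + Poly_Mapping.lookup \<beta> i div 2) = Poly_Mapping.single i (Poly_Mapping.lookup \<beta> i)"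
      using assms by simp
  qed simp
  also have "\<dots> = \<beta>" by (rule expand_keys) auto
  finally have "\<beta> = \<gamma> + \<gamma>" by simp
  moreover have "Poly_Mapping.keys \<gamma> \<subseteq> Poly_Mapping.keys \<beta>"
    unfolding \<gamma>_def by (rule order_trans[OF keys_sum]) auto
  ultimately show ?thesis by blast
qed


theorem corollary2p9:
  fixes n d :: nat and f :: mpoly
  assumes "n \<ge> 1"
    and "is_form n (2*d) f"
    and "\<forall>i<n. Poly_Mapping.lookup f (Poly_Mapping.single i (2*d)) \<ge>
           (\<Sum>\<alpha>\<in>{\<alpha>\<in>Delta n d f. Poly_Mapping.lookup \<alpha> i \<noteq> 0}.
              real (Poly_Mapping.lookup \<alpha> i) * (\<bar>Poly_Mapping.lookup f \<alpha>\<bar> / real (2*d))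
                powr (real (2*d) / (real (Poly_Mapping.lookup \<alpha> i) * real (card (Poly_Mapping.keys \<alpha>)))))"
  shows "SOBS n f"
proof (cases "d = 0")
  case True
  have K: "Poly_Mapping.keys f \<subseteq> {0}"
    using assms(2) True deg0 unfolding is_form_def by auto
  have "Omega n d f = {}" unfolding Omega_def using K by auto
  then have D: "Delta n d f = {}" unfolding Delta_def by auto
  have c: "Poly_Mapping.lookup f 0 \<ge> 0"
    using assms(3) assms(1) True unfolding D by (auto dest: spec[of _ 0])
  have "f = (\<Sum>\<beta>\<in>{0}. monom \<beta> (Poly_Mapping.lookup f \<beta>))"
    unfolding monom_def by (rule expand_keys[symmetric]) (use K in auto)
  also have "\<dots> = monom (0+0) (Poly_Mapping.lookup f 0)" by simp
  finally show ?thesis using SOBS_monom_even[OF c, of 0 n] by simp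
next
  case False
  then have d: "d \<ge> 1" by simp
  define K where "K = Poly_Mapping.keys f"
  define e where "e = (\<lambda>i. Poly_Mapping.single i (2*d) :: nat \<Rightarrow>\<^sub>0 nat)"
  define E where "E = e ` {..<n}"
  define D where "D = Delta n d f"
  define F where "F = (\<lambda>i. Poly_Mapping.lookup f (e i))"
  define g where "g = (\<lambda>\<beta>. monom \<beta> (Poly_Mapping.lookup f \<beta>))"
  define R where "R = (\<lambda>i. \<Sum>\<beta>\<in>D. cc d \<beta> (Poly_Mapping.lookup f \<beta>) i)"
  have fK: "finite K" unfolding K_def by simp
  have Kform: "\<And>\<beta>. \<beta> \<in> K \<Longrightarrow> Poly_Mapping.keys \<beta> \<subseteq> {..<n} \<and> deg_mon \<beta> = 2*d"
    using assms(2) unfolding is_form_def K_def by auto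
  have z: "0 \<notin> K" using Kform d by (fastforce simp: deg_mon_def)
  have Om: "Omega n d f = K - E"
    unfolding Omega_def K_def E_def e_def using z K_def by auto
  have DK: "D \<subseteq> K - E" unfolding D_def Delta_def Om by auto
  have fD: "finite D" using DK fK finite_subset by blast
  have injE: "inj_on e {..<n}"
    unfolding inj_on_def e_def using d by (metis lookup_single_eq lookup_single_not_eq mult_is_0 one_neq_zero zero_neq_numeral le_numeral_extra(2) not_one_le_zero)
  have cond: "F i \<ge> R i" if "i < n" for i
  proof -
    have "R i = (\<Sum>\<alpha>\<in>{\<alpha>\<in>D. Poly_Mapping.lookup \<alpha> i \<noteq> 0}.
              real (Poly_Mapping.lookup \<alpha> i) * (\<bar>Poly_Mapping.lookup f \<alpha>\<bar> / real (2*d))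
                powr (real (2*d) / (real (Poly_Mapping.lookup \<alpha> i) * real (card (Poly_Mapping.keys \<alpha>)))))"
      unfolding R_def cc_def by (subst sum.inter_filter[OF fD]) (rule refl)
    then show ?thesis using assms(3) that unfolding F_def e_def D_def by simp
  qed
  have f1: "f = (\<Sum>\<beta>\<in>K\<inter>E. g \<beta>) + (\<Sum>\<beta>\<in>K-E. g \<beta>)"
  proof -
    have "f = sum g K" using expand_poly[of f] unfolding g_def K_def .
    also have "\<dots> = sum g (K \<inter> E) + sum g (K - E)" by (rule sum.Int_Diff[OF fK])
    finally show ?thesis .
  qed
  have f2: "(\<Sum>\<beta>\<in>K\<inter>E. g \<beta>) = (\<Sum>i<n. monom (e i) (F i))"
  proof -
    have "(\<Sum>\<beta>\<in>K\<inter>E. g \<beta>) = (\<Sum>\<beta>\<in>E. g \<beta>)"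
      by (rule sum.mono_neutral_left) (auto simp: E_def g_def K_def in_keys_iff)
    also have "\<dots> = (\<Sum>i<n. monom (e i) (F i))"
      unfolding E_def using injE by (simp add: sum.reindex g_def F_def)
    finally show ?thesis .
  qed
  have f3: "(\<Sum>\<beta>\<in>K-E. g \<beta>) = (\<Sum>\<beta>\<in>D. g \<beta>) + (\<Sum>\<beta>\<in>(K-E)-D. g \<beta>)"
    using DK fK by (simp add: sum.subset_diff)
  have f4: "(\<Sum>i<n. monom (e i) (F i)) = (\<Sum>i<n. monom (e i) (F i - R i)) + (\<Sum>\<beta>\<in>D. \<Sum>i<n. monom (e i) (cc d \<beta> (Poly_Mapping.lookup f \<beta>) i))"
  proof -
    have "(\<Sum>\<beta>\<in>D. \<Sum>i<n. monom (e i) (cc d \<beta> (Poly_Mapping.lookup f \<beta>) i)) = (\<Sum>i<n. \<Sum>\<beta>\<in>D. monom (e i) (cc d \<beta> (Poly_Mapping.lookup f \<beta>) i))"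
      by (rule sum.swap)
    also have "\<dots> = (\<Sum>i<n. monom (e i) (R i))"
      unfolding R_def using fD by (simp add: monom_sum)
    finally show ?thesis by (simp add: monom_add sum.distrib[symmetric])
  qed
  have ff: "f = (\<Sum>i<n. monom (e i) (F i - R i))
      + (\<Sum>\<beta>\<in>D. (\<Sum>i<n. monom (e i) (cc d \<beta> (Poly_Mapping.lookup f \<beta>) i)) + g \<beta>)
      + (\<Sum>\<beta>\<in>(K-E)-D. g \<beta>)"
    unfolding sum.distrib using f1 f2 f3 f4 by (simp add: algebra_simps)
  have S1: "SOBS n (\<Sum>i<n. monom (e i) (F i - R i))"
  proof (rule SOBS_sum)
    fix i assume i: "i \<in> {..<n}"
    have "e i = Poly_Mapping.single i d + Poly_Mapping.single i d"
      unfolding e_def by (simp add: single_add[symmetric] mult_2)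
    then show "SOBS n (monom (e i) (F i - R i))"
      using cond[of i] i by (auto intro!: SOBS_monom_even split: if_splits)
  qed simp
  have S2: "SOBS n (\<Sum>\<beta>\<in>D. (\<Sum>i<n. monom (e i) (cc d \<beta> (Poly_Mapping.lookup f \<beta>) i)) + g \<beta>)"
  proof (rule SOBS_sum[OF fD])
    fix \<beta> assume b: "\<beta> \<in> D"
    then have bK: "\<beta> \<in> K" using DK by auto
    then have "Poly_Mapping.lookup f \<beta> \<noteq> 0" unfolding K_def by (simp add: in_keys_iff)
    then show "SOBS n ((\<Sum>i<n. monom (e i) (cc d \<beta> (Poly_Mapping.lookup f \<beta>) i)) + g \<beta>)"
      unfolding e_def g_def using Kform[OF bK] d by (intro SOBS_delta) auto
  qed
  have S3: "SOBS n (\<Sum>\<beta>\<in>(K-E)-D. g \<beta>)"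
  proof (rule SOBS_sum)
    fix \<beta> assume b: "\<beta> \<in> (K-E)-D"
    then have bO: "\<beta> \<in> Omega n d f" "\<beta> \<notin> Delta n d f" unfolding Om D_def by auto
    then have pos: "Poly_Mapping.lookup f \<beta> \<ge> 0" and ev: "\<forall>i. even (Poly_Mapping.lookup \<beta> i)"
      unfolding Delta_def by auto
    obtain \<gamma> where \<gamma>: "Poly_Mapping.keys \<gamma> \<subseteq> Poly_Mapping.keys \<beta>" "\<beta> = \<gamma> + \<gamma>" using half_even[OF ev] by blast
    have "Poly_Mapping.keys \<beta> \<subseteq> {..<n}" using Kform b by auto
    then show "SOBS n (g \<beta>)" unfolding g_def using \<gamma> pos by (metis SOBS_monom_even order_trans)
  qed (use fK in auto)
  show ?thesis by (subst ff) (intro SOBS_add S1 S2 S3)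
qed

end
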